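(* Every rule in the SEJR subfamily, for every choice of the completion subprocedure Alg3 and every tie-breaking, outputs a committee that provides EJR for $(\mathcal{A},k)$.
   Context: Setting: voters $N=\{1,\dots,n\}$, candidates $C=\{c_1,\dots,c_m\}$, approval ballots $A_i\subseteq C$, $\mathcal{A}=(A_1,\dots,A_n)$, $k\le m$ a positive integer. EJR: for $\ell\in\{1,\dots,k\}$, $N^*\subseteq N$ is $\ell$-cohesive if $|N^*|\ge\ell n/k$ and $|\bigcap_{i\in N^*}A_i|\ge\ell$. A committee $W$, $|W|=k$, provides EJR if for every $\ell$ and every $\ell$-cohesive $N^*$ some $i\in N^*$ has $|A_i\cap W|\ge\ell$. Dissatisfaction level: for $W\subseteq C$ with $|W|\le k$ and $c\in C\setminus W$, $\ell(c,W)$ is the largest nonnegative integer $\ell$ with $\ell=\lfloor \frac{k}{n}|\{i\in N: c\in A_i,\ |A_i\cap W|<\ell\}|\rfloor$. SEJR subfamily (parametrized by a subprocedure Alg3): start with $W=\emptyset$. While $|W|<k$ and $\max_{c\in C\setminus W}\ell(c,W)>0$, add to $W$ a candidate $c\in C\setminus W$ maximizing $\ell(c,W)$ (ties broken arbitrarily). Afterwards, if $|W|<k$, Alg3 adds arbitrary candidates from $C\setminus W$ until $|W|=k$. Output $W$. *)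

theory Defs
  imports Complex_Main
begin

definition cohesive :: "'v set \<Rightarrow> ('v \<Rightarrow> 'c set) \<Rightarrow> nat \<Rightarrow> nat \<Rightarrow> 'v set \<Rightarrow> bool" where
  "cohesive N A k l G \<longleftrightarrow> G \<subseteq> N \<and>
     real (card G) \<ge> real l * real (card N) / real k \<and>
     card (\<Inter>i\<in>G. A i) \<ge> l"

definition provides_EJR :: "'v set \<Rightarrow> ('v \<Rightarrow> 'c set) \<Rightarrow> nat \<Rightarrow> 'c set \<Rightarrow> bool" where
  "provides_EJR N A k W \<longleftrightarrow> card W = k \<and>
     (\<forall>l\<in>{1..k}. \<forall>G. cohesive N A k l G \<longrightarrow> (\<exists>i\<in>G. card (A i \<inter> W) \<ge> l))"

definition dis_level :: "'v set \<Rightarrow> ('v \<Rightarrow> 'c set) \<Rightarrow> nat \<Rightarrow> 'c set \<Rightarrow> 'c \<Rightarrow> nat" where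
  "dis_level N A k W c = (GREATEST l. int l =
      \<lfloor>real k / real (card N) * real (card {i\<in>N. c \<in> A i \<and> card (A i \<inter> W) < l})\<rfloor>)"

definition sejr_continue :: "'v set \<Rightarrow> 'c set \<Rightarrow> ('v \<Rightarrow> 'c set) \<Rightarrow> nat \<Rightarrow> 'c set \<Rightarrow> bool" where
  "sejr_continue N C A k W \<longleftrightarrow> card W < k \<and> (\<exists>c\<in>C - W. dis_level N A k W c > 0)"

definition sejr_step :: "'v set \<Rightarrow> 'c set \<Rightarrow> ('v \<Rightarrow> 'c set) \<Rightarrow> nat \<Rightarrow> 'c set \<Rightarrow> 'c set \<Rightarrow> bool" where
  "sejr_step N C A k W W' \<longleftrightarrow> sejr_continue N C A k W \<and>
     (\<exists>c\<in>C - W. (\<forall>d\<in>C - W. dis_level N A k W d \<le> dis_level N A k W c) \<and> W' = insert c W)"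

text \<open>Possible outputs of a rule of the SEJR subfamily: run the loop from the empty set
  until it stops, then Alg3 adds arbitrary candidates up to size k.\<close>
definition sejr_output :: "'v set \<Rightarrow> 'c set \<Rightarrow> ('v \<Rightarrow> 'c set) \<Rightarrow> nat \<Rightarrow> 'c set \<Rightarrow> bool" where
  "sejr_output N C A k W' \<longleftrightarrow> (\<exists>W. (sejr_step N C A k)\<^sup>*\<^sup>* {} W \<and> \<not> sejr_continue N C A k W \<and>
      W \<subseteq> W' \<and> W' \<subseteq> C \<and> card W' = k)"

end

theory Submission
  imports Defs
begin

definition Sset :: "'v set \<Rightarrow> ('v \<Rightarrow> 'c set) \<Rightarrow> 'c set \<Rightarrow> 'c \<Rightarrow> nat \<Rightarrow> 'v set" where
  "Sset N A W c l = {i\<in>N. c \<in> A i \<and> card (A i \<inter> W) < l}"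

definition FF :: "'v set \<Rightarrow> ('v \<Rightarrow> 'c set) \<Rightarrow> nat \<Rightarrow> 'c set \<Rightarrow> 'c \<Rightarrow> nat \<Rightarrow> real" where
  "FF N A k W c l = real k / real (card N) * real (card (Sset N A W c l))"

lemma dl_def': "dis_level N A k W c = (GREATEST l. int l = \<lfloor>FF N A k W c l\<rfloor>)"
  by (simp add: dis_level_def FF_def Sset_def)

lemma FF_le_k:
  assumes "finite N" "N \<noteq> {}"
  shows "FF N A k W c l \<le> real k"
proof -
  have "card (Sset N A W c l) \<le> card N"
    using assms(1) by (intro card_mono) (auto simp: Sset_def)
  moreover have "card N > 0" using assms by auto
  ultimately show ?thesis unfolding FF_def
    by (simp add: divide_simps mult_left_mono)
qed

lemma FF_mono_l:
  assumes "finite N" "l \<le> l'"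
  shows "FF N A k W c l \<le> FF N A k W c l'"
proof -
  have "card (Sset N A W c l) \<le> card (Sset N A W c l')"
    using assms by (intro card_mono) (auto simp: Sset_def)
  thus ?thesis unfolding FF_def by (intro mult_left_mono) auto
qed

lemma FF_mono_W:
  assumes "finite N" "W \<subseteq> W'" "finite W'"
  shows "FF N A k W' c l \<le> FF N A k W c l"
proof -
  have "Sset N A W' c l \<subseteq> Sset N A W c l"
  proof
    fix i assume "i \<in> Sset N A W' c l"
    moreover have "card (A i \<inter> W) \<le> card (A i \<inter> W')"
      using assms by (intro card_mono) auto
    ultimately show "i \<in> Sset N A W c l" by (auto simp: Sset_def)
  qed
  hence "card (Sset N A W' c l) \<le> card (Sset N A W c l)"
    using assms by (intro card_mono) (auto simp: Sset_def)
  thus ?thesis unfolding FF_def by (intro mult_left_mono) auto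
qed

lemma P_bound:
  assumes "finite N" "N \<noteq> {}" "int y = \<lfloor>FF N A k W c y\<rfloor>"
  shows "y \<le> k"
proof -
  have "\<lfloor>FF N A k W c y\<rfloor> \<le> int k"
    using floor_mono[OF FF_le_k[OF assms(1,2), of A k W c y]] by simp
  thus ?thesis using assms(3) by simp
qed

lemma dl_bound:
  assumes "finite N" "N \<noteq> {}"
  shows "dis_level N A k W c \<le> k \<and> real (dis_level N A k W c) \<le> FF N A k W c (dis_level N A k W c)"
proof -
  let ?P = "\<lambda>l. int l = \<lfloor>FF N A k W c l\<rfloor>"
  have P0: "?P 0" by (simp add: FF_def Sset_def)
  have bd: "\<forall>y. ?P y \<longrightarrow> y \<le> k" by (auto intro: P_bound[OF assms])
  define g where "g = Greatest ?P"
  have Pg: "?P g" unfolding g_def by (rule GreatestI_nat[of ?P 0 k, OF P0]) (use bd in blast)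
  have gk: "g \<le> k" using bd Pg by blast
  have "real g = real_of_int (int g)" by simp
  also have "\<dots> = real_of_int \<lfloor>FF N A k W c g\<rfloor>" using Pg by simp
  also have "\<dots> \<le> FF N A k W c g" by (rule of_int_floor_le)
  finally have "real g \<le> FF N A k W c g" .
  thus ?thesis using gk unfolding dl_def' g_def by simp
qed

lemma dl_ge:
  assumes "finite N" "N \<noteq> {}" "real x \<le> FF N A k W c x"
  shows "x \<le> dis_level N A k W c"
proof -
  let ?P = "\<lambda>l. int l = \<lfloor>FF N A k W c l\<rfloor>"
  have ex: "\<exists>y\<ge>x. ?P y" if "real x \<le> FF N A k W c x" for x
    using that
  proof (induction "k - x" arbitrary: x rule: less_induct)
    case less
    show ?case
    proof (cases "?P x")
      case True thus ?thesis by auto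
    next
      case False
      have "int x \<le> \<lfloor>FF N A k W c x\<rfloor>" using less.prems by (simp add: le_floor_iff)
      with False have lt: "int x < \<lfloor>FF N A k W c x\<rfloor>" by linarith
      have "\<lfloor>FF N A k W c x\<rfloor> \<le> int k"
        using floor_mono[OF FF_le_k[OF assms(1,2), of A k W c x]] by simp
      with lt have xk: "x < k" by linarith
      have "real (x+1) \<le> FF N A k W c x"
      proof -
        have "int (x+1) \<le> \<lfloor>FF N A k W c x\<rfloor>" using lt by simp
        thus ?thesis by (simp only: le_floor_iff)
      qed
      also have "\<dots> \<le> FF N A k W c (x+1)" by (rule FF_mono_l[OF assms(1)]) simp
      finally have "real (x+1) \<le> FF N A k W c (x+1)" .
      hence "\<exists>y\<ge>x+1. ?P y" using less(1)[of "x+1"] xk by simp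
      then obtain y where "y \<ge> x+1" "?P y" by auto
      thus ?thesis by (intro exI[of _ y]) auto
    qed
  qed
  obtain y where y: "y \<ge> x" "?P y" using ex[OF assms(3)] by auto
  have bd: "\<forall>y. ?P y \<longrightarrow> y \<le> k" by (auto intro: P_bound[OF assms(1,2)])
  have "y \<le> Greatest ?P" by (rule Greatest_le_nat[of ?P y k, OF y(2)]) (use bd in simp)
  thus ?thesis using y(1) unfolding dl_def' by simp
qed

lemma dl_mono:
  assumes "finite N" "N \<noteq> {}" "W \<subseteq> W'" "finite W'"
  shows "dis_level N A k W' c \<le> dis_level N A k W c"
proof -
  let ?l = "dis_level N A k W' c"
  have "real ?l \<le> FF N A k W' c ?l" using dl_bound[OF assms(1,2), of A k W' c] by blast
  also have "\<dots> \<le> FF N A k W c ?l" by (rule FF_mono_W[OF assms(1,3,4)])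
  finally show ?thesis by (rule dl_ge[OF assms(1,2)])
qed

theorem mainTheorem10:
  fixes N :: "'v set" and C :: "'c set" and A :: "'v \<Rightarrow> 'c set" and k :: nat and W :: "'c set"
  assumes "finite N" and "N \<noteq> {}" and "finite C"
    and "\<forall>i\<in>N. A i \<subseteq> C"
    and "0 < k" and "k \<le> card C"
    and "sejr_output N C A k W"
  shows "provides_EJR N A k W"
proof -
  from assms(7) obtain W0 where rt: "(sejr_step N C A k)\<^sup>*\<^sup>* {} W0"
    and nc: "\<not> sejr_continue N C A k W0" and W0W: "W0 \<subseteq> W" and WC: "W \<subseteq> C"
    and cW: "card W = k"
    unfolding sejr_output_def by blast
  have finW: "finite W" using WC assms(3) finite_subset by blast
  have finA: "\<forall>i\<in>N. finite (A i)" using assms(3,4) finite_subset by blast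
  have nN: "real (card N) > 0" using assms(1,2) by (simp add: card_gt_0_iff)
  have kp: "real k > 0" using assms(5) by simp
  show ?thesis unfolding provides_EJR_def
  proof (intro conjI ballI allI impI)
    show "card W = k" by (rule cW)
  next
    fix l G assume l: "l \<in> {1..k}" and coh: "cohesive N A k l G"
    show "\<exists>i\<in>G. l \<le> card (A i \<inter> W)"
    proof (rule ccontr)
      assume "\<not> (\<exists>i\<in>G. l \<le> card (A i \<inter> W))"
      hence bad: "\<forall>i\<in>G. card (A i \<inter> W) < l" by auto
      from coh have GN: "G \<subseteq> N"
        and cG: "real l * real (card N) / real k \<le> real (card G)"
        and cI: "l \<le> card (\<Inter>i\<in>G. A i)" unfolding cohesive_def by auto
      have l1: "l \<ge> 1" "l \<le> k" using l by auto
      have "real l * real (card N) / real k > 0" using l1 nN kp by simp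
      hence "G \<noteq> {}" using cG by auto
      then obtain i0 where i0: "i0 \<in> G" by blast
      have K: "\<exists>c\<in>C - X. l \<le> dis_level N A k X c" if XW: "X \<subseteq> W" for X
      proof -
        let ?I = "\<Inter>i\<in>G. A i"
        have "\<not> ?I \<subseteq> X"
        proof
          assume "?I \<subseteq> X"
          hence "?I \<subseteq> A i0 \<inter> X" using i0 by auto
          hence "card ?I \<le> card (A i0 \<inter> X)" using finA i0 GN by (intro card_mono) auto
          also have "\<dots> \<le> card (A i0 \<inter> W)" using XW finW by (intro card_mono) auto
          also have "\<dots> < l" using bad i0 by auto
          finally show False using cI by simp
        qed
        then obtain c where c: "c \<in> ?I" "c \<notin> X" by blast
        have cC: "c \<in> C" using c i0 GN assms(4) by blast
        have "G \<subseteq> Sset N A X c l"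
        proof
          fix i assume i: "i \<in> G"
          have "card (A i \<inter> X) \<le> card (A i \<inter> W)" using XW finW by (intro card_mono) auto
          thus "i \<in> Sset N A X c l" using bad i GN c by (auto simp: Sset_def)
        qed
        hence "card G \<le> card (Sset N A X c l)" using assms(1) by (intro card_mono) (auto simp: Sset_def)
        hence cS: "real l * real (card N) / real k \<le> real (card (Sset N A X c l))" using cG by linarith
        have "real l = real k / real (card N) * (real l * real (card N) / real k)"
          using nN kp by (simp add: field_simps)
        also have "\<dots> \<le> real k / real (card N) * real (card (Sset N A X c l))"
          by (intro mult_left_mono cS) auto
        finally have "real l \<le> FF N A k X c l" unfolding FF_def .
        hence "l \<le> dis_level N A k X c" by (rule dl_ge[OF assms(1,2)])
        thus ?thesis using cC c by blast
      qed
      have inv: "X \<subseteq> W \<longrightarrow> (\<exists>w L. l \<le> L \<and> (\<forall>c\<in>C-X. dis_level N A k X c \<le> L) \<and>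
          real (card X) * real (card N) / real k \<le> sum w N \<and>
          (\<forall>i\<in>N. w i \<le> 1 \<and> w i \<le> real (card (A i \<inter> X)) / real L))"
        if "(sejr_step N C A k)\<^sup>*\<^sup>* {} X" for X
        using that
      proof (induction rule: rtranclp_induct)
        case base
        show ?case
          using l1 dl_bound[OF assms(1,2), of A k "{}"] by (intro impI exI[of _ "\<lambda>_. 0"] exI[of _ k]) auto
      next
        case (step X X')
        show ?case
        proof
          assume X'W: "X' \<subseteq> W"
          from step.hyps(2) obtain c where c: "c \<in> C - X"
            and cmax: "\<forall>d\<in>C - X. dis_level N A k X d \<le> dis_level N A k X c"
            and X': "X' = insert c X" unfolding sejr_step_def by blast
          have XW: "X \<subseteq> W" using X'W X' by auto
          have finX: "finite X" using XW finW finite_subset by blast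
          have finX': "finite X'" using X' finX by simp
          from step.IH XW obtain w L where L: "l \<le> L"
            and Lmax: "\<forall>c\<in>C-X. dis_level N A k X c \<le> L"
            and sw: "real (card X) * real (card N) / real k \<le> sum w N"
            and wb: "\<forall>i\<in>N. w i \<le> 1 \<and> w i \<le> real (card (A i \<inter> X)) / real L" by blast
          define ll where "ll = dis_level N A k X c"
          have lll: "l \<le> ll" using K[OF XW] cmax unfolding ll_def by (meson le_trans)
          have llL: "ll \<le> L" using Lmax c ll_def by auto
          have llp: "real ll > 0" using lll l1 by simp
          define S where "S = Sset N A X c ll"
          have SN: "S \<subseteq> N" by (auto simp: S_def Sset_def)
          have FS: "real ll \<le> FF N A k X c ll" using dl_bound[OF assms(1,2), of A k X c] ll_def by simp
          hence "real ll \<le> real k / real (card N) * real (card S)" unfolding FF_def S_def .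
          hence cS: "real (card N) / real k \<le> real (card S) / real ll"
            using nN kp llp by (simp add: field_simps)
          define w' where "w' = (\<lambda>i. w i + (if i \<in> S then 1 / real ll else 0))"
          have "sum (\<lambda>i. if i \<in> S then 1 / real ll else 0) N = sum (\<lambda>i. 1 / real ll) S"
            using SN assms(1) by (simp add: sum.If_cases Int_absorb1 Int_commute)
          hence sw': "sum w' N = sum w N + real (card S) / real ll"
            unfolding w'_def sum.distrib by simp
          have cX': "card X' = card X + 1" using c X' finX by simp
          have "real (card X') * real (card N) / real k
              = real (card X) * real (card N) / real k + real (card N) / real k"
            using cX' kp by (simp add: field_simps)
          also have "\<dots> \<le> sum w' N" using sw cS sw' by linarith
          finally have sum': "real (card X') * real (card N) / real k \<le> sum w' N" .
          have max': "\<forall>d\<in>C-X'. dis_level N A k X' d \<le> ll"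
          proof
            fix d assume d: "d \<in> C - X'"
            have "dis_level N A k X' d \<le> dis_level N A k X d"
              using X' finX' by (intro dl_mono[OF assms(1,2)]) auto
            also have "\<dots> \<le> ll" using cmax d X' ll_def by auto
            finally show "dis_level N A k X' d \<le> ll" .
          qed
          have vot: "\<forall>i\<in>N. w' i \<le> 1 \<and> w' i \<le> real (card (A i \<inter> X')) / real ll"
          proof
            fix i assume iN: "i \<in> N"
            define s where "s = card (A i \<inter> X)"
            have finAi: "finite (A i)" using finA iN by blast
            have ws: "w i \<le> real s / real ll"
            proof -
              have "w i \<le> real s / real L" using wb iN s_def by blast
              also have "\<dots> \<le> real s / real ll"
                using llL llp by (intro divide_left_mono) auto
              finally show ?thesis .
            qed
            have ss': "s \<le> card (A i \<inter> X')" unfolding s_def using X' finX'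
              by (intro card_mono) auto
            show "w' i \<le> 1 \<and> w' i \<le> real (card (A i \<inter> X')) / real ll"
            proof (cases "i \<in> S")
              case True
              hence ci: "c \<in> A i" and sl: "s < ll" by (auto simp: S_def Sset_def s_def)
              have "A i \<inter> X' = insert c (A i \<inter> X)" using X' ci by auto
              hence s1: "card (A i \<inter> X') = s + 1" using c finX s_def by simp
              have "w' i \<le> real s / real ll + 1 / real ll" using True ws w'_def by simp
              also have "\<dots> = real (s + 1) / real ll" by (simp add: add_divide_distrib)
              finally have a: "w' i \<le> real (s + 1) / real ll" .
              have "real (s + 1) / real ll \<le> 1" using sl llp by simp
              thus ?thesis using a s1 by simp
            next
              case False
              hence "w' i = w i" by (simp add: w'_def)
              moreover have "real s / real ll \<le> real (card (A i \<inter> X')) / real ll"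
                using ss' llp by (intro divide_right_mono) auto
              ultimately show ?thesis using wb iN ws by auto
            qed
          qed
          show "\<exists>w L. l \<le> L \<and> (\<forall>c\<in>C-X'. dis_level N A k X' c \<le> L) \<and>
            real (card X') * real (card N) / real k \<le> sum w N \<and>
            (\<forall>i\<in>N. w i \<le> 1 \<and> w i \<le> real (card (A i \<inter> X')) / real L)"
            using lll max' sum' vot by blast
        qed
      qed
      obtain c where "c \<in> C - W0" "l \<le> dis_level N A k W0 c" using K[OF W0W] by blast
      hence "\<not> card W0 < k" using nc l1 unfolding sejr_continue_def by force
      hence W0eq: "W0 = W" using W0W finW cW by (intro card_seteq) auto
      from inv[OF rt] W0eq obtain w L where L: "l \<le> L"
        and sw: "real (card W) * real (card N) / real k \<le> sum w N"
        and wb: "\<forall>i\<in>N. w i \<le> 1 \<and> w i \<le> real (card (A i \<inter> W)) / real L" by blast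
      have "sum w N < sum (\<lambda>_. 1) N"
      proof (rule sum_strict_mono_ex1[OF assms(1)])
        show "\<forall>x\<in>N. w x \<le> 1" using wb by blast
        have "i0 \<in> N" using i0 GN by blast
        moreover have "real (card (A i0 \<inter> W)) / real L < 1"
        proof -
          have "card (A i0 \<inter> W) < L" using bad i0 L by (meson less_le_trans)
          thus ?thesis by simp
        qed
        ultimately show "\<exists>a\<in>N. w a < 1" using wb by force
      qed
      moreover have "real (card W) * real (card N) / real k = real (card N)"
        using cW kp by simp
      ultimately show False using sw by simp
    qed
  qed
qed

end
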